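(* For every $r\in\mathbb N$ and every $s>0$, the Hardy–Steklov-type operator $\mathcal P_r(s)$ maps $\mathbf E$ into $\mathbf E^{r}$.
   Context: Let $G=\mathbb R_+\times\mathbb R$ be the "$ax+b$" group with multiplication $(a_1,b_1)(a_2,b_2)=(a_1a_2,\,a_1b_2+b_1)$. Let $T$ be a strongly continuous representation of $G$ in a Banach space $\mathbf E$ with $\|T(g)f\|_{\mathbf E}\le\|f\|_{\mathbf E}$. Put $T_1(t)=T(e^{t},0)$, $T_2(t)=T(1,t)$, with (closed) generators $\mathbb A_1,\mathbb A_2$. For $r\in\mathbb N$, $\mathbf E^{r}$ is the space of $f\in\mathbf E$ for which all products $\mathbb A_{j_1}\cdots\mathbb A_{j_k}f$, $1\le k\le r$, $j_i\in\{1,2\}$, are defined (with the norm $\|f\|_{\mathbf E}+\sum_{k=1}^r\sum_{(j_1,\dots,j_k)}\|\mathbb A_{j_1}\cdots\mathbb A_{j_k}f\|_{\mathbf E}$). For $s>0$, $r\in\mathbb N$ and $f\in\mathbf E$, $$\mathcal P_r(s)f=(s/r)^{-2r}\int_{[0,s/r]^{2r}}T_1(t_{1,1}+\dots+t_{1,r})\,T_2(t_{2,1}+\dots+t_{2,r})f\;dt_{1,1}\cdots dt_{1,r}\,dt_{2,1}\cdots dt_{2,r}$$ (Bochner integral). *)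

theory Defs
  imports "HOL-Analysis.Analysis"
begin

text \<open>The ax+b group G = R_+ x R is modelled by pairs (a,b) :: real \<times> real with a > 0.\<close>

definition axb_mult :: "real \<times> real \<Rightarrow> real \<times> real \<Rightarrow> real \<times> real" where
  "axb_mult g1 g2 = (fst g1 * fst g2, fst g1 * snd g2 + snd g1)"

definition contr_rep :: "(real \<times> real \<Rightarrow> 'a::banach \<Rightarrow> 'a) \<Rightarrow> bool" where
  "contr_rep T \<longleftrightarrow>
     (\<forall>g. fst g > 0 \<longrightarrow> bounded_linear (T g)) \<and>
     T (1, 0) = id \<and>
     (\<forall>g1 g2. fst g1 > 0 \<longrightarrow> fst g2 > 0 \<longrightarrow> T (axb_mult g1 g2) = T g1 \<circ> T g2) \<and>
     (\<forall>f. continuous_on ({0<..} \<times> UNIV) (\<lambda>g. T g f)) \<and>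
     (\<forall>g f. fst g > 0 \<longrightarrow> norm (T g f) \<le> norm f)"

definition oneparam :: "(real \<times> real \<Rightarrow> 'a \<Rightarrow> 'a) \<Rightarrow> nat \<Rightarrow> real \<Rightarrow> 'a \<Rightarrow> 'a" where
  "oneparam T j t = (if j = 1 then T (exp t, 0) else T (1, t))"

definition generator_at :: "(real \<Rightarrow> 'a::real_normed_vector \<Rightarrow> 'a) \<Rightarrow> 'a \<Rightarrow> 'a \<Rightarrow> bool" where
  "generator_at S f y \<longleftrightarrow> ((\<lambda>t. (S t f - f) /\<^sub>R t) \<longlongrightarrow> y) (at_right 0)"

text \<open>word_app T js f y: the product A_{j_1} ... A_{j_k} f is defined and equals y,
  where js = [j_1, ..., j_k] (A_{j_k} applied first).\<close>
inductive word_app :: "(real \<times> real \<Rightarrow> 'a::real_normed_vector \<Rightarrow> 'a) \<Rightarrow> nat list \<Rightarrow> 'a \<Rightarrow> 'a \<Rightarrow> bool"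
  for T where
  nil: "word_app T [] f f"
| cons: "word_app T js f g \<Longrightarrow> generator_at (oneparam T j) g y \<Longrightarrow> word_app T (j # js) f y"

definition Er :: "(real \<times> real \<Rightarrow> 'a::real_normed_vector \<Rightarrow> 'a) \<Rightarrow> nat \<Rightarrow> 'a set" where
  "Er T r = {f. \<forall>js. js \<noteq> [] \<longrightarrow> length js \<le> r \<longrightarrow> set js \<subseteq> {1, 2} \<longrightarrow> (\<exists>y. word_app T js f y)}"

fun cube_int :: "nat \<Rightarrow> real \<Rightarrow> (real list \<Rightarrow> 'a::real_normed_vector) \<Rightarrow> 'a" where
  "cube_int 0 h F = F []"
| "cube_int (Suc n) h F = integral {0..h} (\<lambda>t. cube_int n h (\<lambda>ts. F (t # ts)))"

text \<open>The Hardy--Steklov type operator P_r(s); variables ordered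
  t_{1,1},...,t_{1,r},t_{2,1},...,t_{2,r}.\<close>
definition hs_op :: "(real \<times> real \<Rightarrow> 'a::real_normed_vector \<Rightarrow> 'a) \<Rightarrow> nat \<Rightarrow> real \<Rightarrow> 'a \<Rightarrow> 'a" where
  "hs_op T r s f = inverse ((s / real r) ^ (2 * r)) *\<^sub>R
     cube_int (2 * r) (s / real r)
       (\<lambda>ts. oneparam T 1 (sum_list (take r ts)) (oneparam T 2 (sum_list (drop r ts)) f))"

end

theory Submission
  imports Defs
begin


lemma vd_quot:
  fixes f :: "real \<Rightarrow> 'a::real_normed_vector"
  assumes d: "(f has_vector_derivative v) (at x within {x..b})" and xb: "x < b"
  shows "((\<lambda>t. (f (x+t) - f x) /\<^sub>R t) \<longlongrightarrow> v) (at_right 0)"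
proof -
  have "(f has_vector_derivative v) (at x within {x<..})"
    using d at_within_Icc_at_right[OF xb] by simp
  hence "((\<lambda>y. (1 / norm (y - x)) *\<^sub>R (f y - (f x + (y - x) *\<^sub>R v))) \<longlongrightarrow> 0) (at x within {x<..})"
    unfolding has_vector_derivative_def has_derivative_within by blast
  hence "((\<lambda>y. (1 / norm (y - x)) *\<^sub>R (f y - (f x + (y - x) *\<^sub>R v)) + v) \<longlongrightarrow> 0 + v) (at x within {x<..})"
    by (intro tendsto_add tendsto_const)
  moreover have "eventually (\<lambda>y. (1 / norm (y - x)) *\<^sub>R (f y - (f x + (y - x) *\<^sub>R v)) + v = (f y - f x) /\<^sub>R (y - x)) (at x within {x<..})"
  proof -
    have "x < y \<Longrightarrow> (1 / norm (y - x)) *\<^sub>R (f y - (f x + (y - x) *\<^sub>R v)) + v = (f y - f x) /\<^sub>R (y - x)" for y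
    proof -
      assume "x < y"
      hence "norm (y - x) = y - x" by simp
      thus ?thesis using \<open>x < y\<close> by (simp add: scaleR_diff_right scaleR_add_right inverse_eq_divide)
    qed
    thus ?thesis unfolding eventually_at_filter by (auto intro: always_eventually)
  qed
  ultimately have "((\<lambda>y. (f y - f x) /\<^sub>R (y - x)) \<longlongrightarrow> v) (at_right x)"
    using Lim_transform_eventually by fastforce
  hence "(((\<lambda>y. (f y - f x) /\<^sub>R (y - x)) \<circ> (\<lambda>t. t + x)) \<longlongrightarrow> v) (at_right 0)"
    using tendsto_compose_filtermap at_right_to_0[of x] by metis
  thus ?thesis by (simp add: o_def add.commute)
qed

lemma steklov:
  fixes U :: "real \<Rightarrow> 'a::banach \<Rightarrow> 'a"
  assumes lin: "\<And>t. bounded_linear (U t)"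
    and add: "\<And>s t y. U (s+t) y = U s (U t y)"
    and zero: "\<And>y. U 0 y = y"
    and cont: "\<And>y. continuous_on UNIV (\<lambda>t. U t y)"
    and h: "h > 0"
  shows "((\<lambda>t. (U t (integral {0..h} (\<lambda>u. U u x)) - integral {0..h} (\<lambda>u. U u x)) /\<^sub>R t)
           \<longlongrightarrow> U h x - x) (at_right 0)"
proof -
  define G where "G v = integral {0..v} (\<lambda>u. U u x)" for v
  have ci: "continuous_on {a..b} (\<lambda>u. U u x)" for a b using cont continuous_on_subset by blast
  have intg: "(\<lambda>u. U u x) integrable_on {a..b}" for a b by (rule integrable_continuous_real[OF ci])
  have key: "U t (integral {0..h} (\<lambda>u. U u x)) = G (t+h) - G t" if t0: "t \<ge> 0" for t
  proof -
    have "U t (integral {0..h} (\<lambda>u. U u x)) = integral {0..h} (\<lambda>u. U t (U u x))"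
      using integral_linear[OF intg lin, of 0 h t] by (simp add: o_def)
    also have "\<dots> = integral {0..h} (\<lambda>u. U (u + t) x)" by (simp add: add[symmetric] add.commute)
    also have "\<dots> = integral {t..h+t} (\<lambda>u. U u x)"
      using integral_shift_real_ivl[where f="\<lambda>u. U u x" and a=t and b="h+t" and c=t] by simp
    also have "\<dots> = G (t+h) - G t"
      using Henstock_Kurzweil_Integration.integral_combine[where a=0 and c=t and b="t+h", OF _ _ intg] t0 h unfolding G_def by (simp add: algebra_simps)
    finally show ?thesis .
  qed
  have der: "(G has_vector_derivative U v x) (at v within {0..2*h})" if "v \<in> {0..2*h}" for v
    unfolding G_def by (rule integral_has_vector_derivative[OF ci that])
  have d0: "(G has_vector_derivative U 0 x) (at 0 within {0..2*h})" using der h by simp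
  have dh: "(G has_vector_derivative U h x) (at h within {h..2*h})"
    using der[of h] h by (auto intro: has_vector_derivative_within_subset)
  have l0: "((\<lambda>t. (G (0+t) - G 0) /\<^sub>R t) \<longlongrightarrow> U 0 x) (at_right 0)"
    by (rule vd_quot[OF d0]) (use h in simp)
  have lh: "((\<lambda>t. (G (h+t) - G h) /\<^sub>R t) \<longlongrightarrow> U h x) (at_right 0)"
    by (rule vd_quot[OF dh]) (use h in simp)
  have "((\<lambda>t. (G (h+t) - G h) /\<^sub>R t - (G (0+t) - G 0) /\<^sub>R t) \<longlongrightarrow> U h x - U 0 x) (at_right 0)"
    by (intro tendsto_diff l0 lh)
  moreover have "eventually (\<lambda>t. (G (h+t) - G h) /\<^sub>R t - (G (0+t) - G 0) /\<^sub>R t =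
     (U t (integral {0..h} (\<lambda>u. U u x)) - integral {0..h} (\<lambda>u. U u x)) /\<^sub>R t) (at_right 0)"
  proof -
    have "G 0 = 0" unfolding G_def by simp
    hence "t > 0 \<Longrightarrow> (G (h+t) - G h) /\<^sub>R t - (G (0+t) - G 0) /\<^sub>R t =
     (U t (integral {0..h} (\<lambda>u. U u x)) - integral {0..h} (\<lambda>u. U u x)) /\<^sub>R t" for t
    proof -
      assume "t > 0"
      have e: "U t (integral {0..h} (\<lambda>u. U u x)) - integral {0..h} (\<lambda>u. U u x) = (G (h+t) - G h) - (G (0+t) - G 0)"
        using key[of t] \<open>t>0\<close> \<open>G 0 = 0\<close> unfolding G_def by (simp add: algebra_simps)
      show ?thesis unfolding e by (simp add: scaleR_diff_right)
    qed
    thus ?thesis unfolding eventually_at_filter by (auto intro: always_eventually)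
  qed
  ultimately show ?thesis using zero Lim_transform_eventually by fastforce
qed



lemma word_app_snoc:
  assumes "word_app T js g y" "generator_at (oneparam T j) x g"
  shows "word_app T (js @ [j]) x y"
  using assms by (induction rule: word_app.induct) (auto intro: word_app.intros)

lemma gen_add: "generator_at S x y \<Longrightarrow> generator_at S x' y' \<Longrightarrow> (\<And>t. linear (S t)) \<Longrightarrow>
   generator_at S (x + x') (y + y')"
  unfolding generator_at_def
proof -
  assume a: "((\<lambda>t. (S t x - x) /\<^sub>R t) \<longlongrightarrow> y) (at_right 0)" "((\<lambda>t. (S t x' - x') /\<^sub>R t) \<longlongrightarrow> y') (at_right 0)"
    and l: "\<And>t. linear (S t)"
  have "((\<lambda>t. (S t x - x) /\<^sub>R t + (S t x' - x') /\<^sub>R t) \<longlongrightarrow> y + y') (at_right 0)"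
    by (intro tendsto_add a)
  moreover have "(S t x - x) /\<^sub>R t + (S t x' - x') /\<^sub>R t = (S t (x + x') - (x + x')) /\<^sub>R t" for t
    using linear_add[OF l] by (simp add: algebra_simps scaleR_diff_right scaleR_add_right)
  ultimately show "((\<lambda>t. (S t (x + x') - (x + x')) /\<^sub>R t) \<longlongrightarrow> y + y') (at_right 0)" by simp
qed

lemma gen_scale: "generator_at S x y \<Longrightarrow> (\<And>t. linear (S t)) \<Longrightarrow>
   generator_at S (c *\<^sub>R x) (c *\<^sub>R y)"
  unfolding generator_at_def
proof -
  assume a: "((\<lambda>t. (S t x - x) /\<^sub>R t) \<longlongrightarrow> y) (at_right 0)"
    and l: "\<And>t. linear (S t)"
  have "((\<lambda>t. c *\<^sub>R ((S t x - x) /\<^sub>R t)) \<longlongrightarrow> c *\<^sub>R y) (at_right 0)"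
    by (intro tendsto_scaleR a tendsto_const)
  moreover have "c *\<^sub>R ((S t x - x) /\<^sub>R t) = (S t (c *\<^sub>R x) - c *\<^sub>R x) /\<^sub>R t" for t
    using linear_scale[OF l] by (simp add: algebra_simps scaleR_diff_right)
  ultimately show "((\<lambda>t. (S t (c *\<^sub>R x) - c *\<^sub>R x) /\<^sub>R t) \<longlongrightarrow> c *\<^sub>R y) (at_right 0)" by simp
qed

locale crep =
  fixes T :: "real \<times> real \<Rightarrow> 'a::banach \<Rightarrow> 'a"
  assumes cr: "contr_rep T"
begin

definition S1 :: "real \<Rightarrow> 'a \<Rightarrow> 'a" where "S1 t = T (exp t, 0)"
definition S2 :: "real \<Rightarrow> 'a \<Rightarrow> 'a" where "S2 t = T (1, t)"

lemma op1: "oneparam T 1 = S1" and op2: "oneparam T 2 = S2"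
  by (auto simp: oneparam_def S1_def S2_def fun_eq_iff)

lemma lin1: "bounded_linear (S1 t)" and lin2: "bounded_linear (S2 t)"
  using cr by (auto simp: contr_rep_def S1_def S2_def)

lemma S1_add: "S1 (s+t) x = S1 s (S1 t x)"
proof -
  have "T (axb_mult (exp s, 0) (exp t, 0)) = T (exp s, 0) \<circ> T (exp t, 0)"
    using cr by (simp add: contr_rep_def)
  thus ?thesis by (simp add: S1_def axb_mult_def exp_add)
qed

lemma S2_add: "S2 (s+t) x = S2 s (S2 t x)"
proof -
  have "T (axb_mult (1, s) (1, t)) = T (1, s) \<circ> T (1, t)"
    using cr by (simp add: contr_rep_def)
  thus ?thesis by (simp add: S2_def axb_mult_def add.commute)
qed

lemma S1_0: "S1 0 x = x" and S2_0: "S2 0 x = x"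
  using cr by (auto simp: contr_rep_def S1_def S2_def)

lemma cont1: "continuous_on UNIV (\<lambda>t. S1 t x)"
proof -
  have c: "continuous_on ({0<..} \<times> UNIV) (\<lambda>g. T g x)" using cr by (simp add: contr_rep_def)
  have "continuous_on UNIV (\<lambda>t::real. (exp t :: real, 0::real))" by (intro continuous_on_Pair continuous_on_const continuous_at_imp_continuous_on ballI) (simp add: isCont_exp)
  moreover have "range (\<lambda>t::real. (exp t :: real, 0::real)) \<subseteq> {0<..} \<times> UNIV" by auto
  ultimately show ?thesis using continuous_on_compose2[OF c] by (auto simp: S1_def)
qed

lemma cont2: "continuous_on UNIV (\<lambda>t. S2 t x)"
proof -
  have c: "continuous_on ({0<..} \<times> UNIV) (\<lambda>g. T g x)" using cr by (simp add: contr_rep_def)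
  have "continuous_on UNIV (\<lambda>t. (1::real, t))" by (intro continuous_intros)
  have "range (\<lambda>t. (1::real, t)) \<subseteq> {0<..} \<times> UNIV" by auto
  from continuous_on_compose2[OF c \<open>continuous_on UNIV (\<lambda>t. (1::real, t))\<close> this] show ?thesis by (auto simp: S2_def)
qed

lemma norm1: "norm (S1 t x) \<le> norm x" and norm2: "norm (S2 t x) \<le> norm x"
  using cr by (auto simp: contr_rep_def S1_def S2_def)

lemma comm21: "S2 u (S1 t x) = S1 t (S2 (exp (-t) * u) x)"
proof -
  have "T (axb_mult (1, u) (exp t, 0)) = T (1, u) \<circ> T (exp t, 0)"
       "T (axb_mult (exp t, 0) (1, exp (-t) * u)) = T (exp t, 0) \<circ> T (1, exp (-t) * u)"
    using cr by (simp_all add: contr_rep_def)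
  moreover have "axb_mult (1, u) (exp t, 0) = axb_mult (exp t, 0) (1, exp (-t) * u)"
    by (simp add: axb_mult_def exp_minus field_simps)
  ultimately show ?thesis by (metis S1_def S2_def comp_apply)
qed

end


context crep begin

lemma S1_scale: "S1 t (c *\<^sub>R x) = c *\<^sub>R S1 t x" and S1_diff: "S1 t (x - y) = S1 t x - S1 t y"
  and S1_plus: "S1 t (x + y) = S1 t x + S1 t y"
  and S2_scale: "S2 t (c *\<^sub>R x) = c *\<^sub>R S2 t x" and S2_diff: "S2 t (x - y) = S2 t x - S2 t y"
  and S2_plus: "S2 t (x + y) = S2 t x + S2 t y"
  using lin1[of t] lin2[of t] by (simp_all add: bounded_linear.linear linear_scale linear_diff linear_add)

lemma gen1_pref:
  assumes "generator_at S1 w v" shows "generator_at S1 (S1 c w) (S1 c v)"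
proof -
  have "((\<lambda>t. S1 c ((S1 t w - w) /\<^sub>R t)) \<longlongrightarrow> S1 c v) (at_right 0)"
    using bounded_linear.tendsto[OF lin1 assms[unfolded generator_at_def]] .
  moreover have "S1 c ((S1 t w - w) /\<^sub>R t) = (S1 t (S1 c w) - S1 c w) /\<^sub>R t" for t
    by (simp add: S1_scale S1_diff S1_add[symmetric] add.commute)
  ultimately show ?thesis unfolding generator_at_def by simp
qed

lemma gen2_pref:
  assumes "generator_at S2 w v" shows "generator_at S2 (S1 c w) (exp (-c) *\<^sub>R S1 c v)"
proof -
  have f: "filterlim (\<lambda>u. exp (-c) * u) (at_right 0) (at_right (0::real))"
  proof -
    have "((\<lambda>u. exp (-c) * u) \<longlongrightarrow> exp (-c) * 0) (at_right (0::real))"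
      by (intro tendsto_intros)
    moreover have "eventually (\<lambda>u. exp (-c) * u \<in> {0<..} \<and> exp (-c) * u \<noteq> 0) (at_right (0::real))"
      unfolding eventually_at_filter by (auto intro: always_eventually)
    ultimately show ?thesis unfolding filterlim_at by simp
  qed
  define q where "q u = (S2 u w - w) /\<^sub>R u" for u
  have "((\<lambda>u. q (exp (-c) * u)) \<longlongrightarrow> v) (at_right 0)"
    using filterlim_compose[OF assms[unfolded generator_at_def] f] unfolding q_def by simp
  hence "((\<lambda>u. exp (-c) *\<^sub>R S1 c (q (exp (-c) * u))) \<longlongrightarrow> exp (-c) *\<^sub>R S1 c v) (at_right 0)"
    by (intro tendsto_scaleR tendsto_const bounded_linear.tendsto[OF lin1])
  moreover have "exp (-c) *\<^sub>R S1 c (q (exp (-c) * u)) = (S2 u (S1 c w) - S1 c w) /\<^sub>R u" for u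
  proof -
    have e: "exp (- c) * (inverse (exp (- c)) * inverse u) = inverse u" by simp
    show ?thesis by (simp add: q_def comm21 S1_scale S1_diff scaleR_diff_right e)
  qed
  ultimately show ?thesis unfolding generator_at_def by simp
qed

end


locale crep_h = crep +
  fixes h :: real
  assumes hpos: "h > 0"
begin

definition U :: "nat \<Rightarrow> real \<Rightarrow> 'a \<Rightarrow> 'a" where
  "U a t x = exp (- (real a * t)) *\<^sub>R S1 t x"
definition Mw :: "nat \<Rightarrow> 'a \<Rightarrow> 'a" where
  "Mw a x = integral {0..h} (\<lambda>t. U a t x)"
definition M2 :: "'a \<Rightarrow> 'a" where
  "M2 x = integral {0..h} (\<lambda>t. S2 t x)"

lemma U_lin: "bounded_linear (U a t)"
  unfolding U_def by (rule bounded_linear_compose[OF bounded_linear_scaleR_right lin1])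

lemma U_add: "U a (s+t) y = U a s (U a t y)"
  by (simp add: U_def S1_add S1_scale algebra_simps exp_add[symmetric])

lemma U_0: "U a 0 y = y" by (simp add: U_def S1_0)

lemma U_cont: "continuous_on A (\<lambda>t. U a t y)"
proof -
  have "continuous_on UNIV (\<lambda>t. U a t y)"
    unfolding U_def by (intro continuous_intros cont1)
  thus ?thesis using continuous_on_subset by blast
qed

lemma S2_cont: "continuous_on A (\<lambda>t. S2 t y)"
  using cont2 continuous_on_subset by blast

lemma genU_Mw: "generator_at (U a) (Mw a x) (U a h x - x)"
  unfolding generator_at_def Mw_def
  by (rule steklov[OF U_lin U_add U_0 U_cont hpos])

lemma gen2_M2: "generator_at S2 (M2 x) (S2 h x - x)"
  unfolding generator_at_def M2_def
  by (rule steklov[OF lin2 S2_add S2_0 cont2 hpos])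

lemma gen1_from_U:
  assumes g: "generator_at (U a) w v"
  shows "generator_at S1 w (v + real a *\<^sub>R w)"
proof -
  have e1: "((\<lambda>t. exp (real a * t)) \<longlongrightarrow> 1) (at_right 0)"
  proof -
    have "((\<lambda>t. exp (real a * t)) \<longlongrightarrow> exp (real a * 0)) (at_right 0)"
      by (intro tendsto_intros)
    thus ?thesis by simp
  qed
  have "((\<lambda>t. exp (real a * t)) has_field_derivative real a * exp (real a * 0)) (at 0)"
    by (auto intro!: derivative_eq_intros)
  hence "((\<lambda>t. (exp (real a * t) - exp (real a * 0)) / (t - 0)) \<longlongrightarrow> real a * exp (real a * 0)) (at 0)"
    unfolding has_field_derivative_iff by simp
  hence e2: "((\<lambda>t. (exp (real a * t) - 1) / t) \<longlongrightarrow> real a) (at_right 0)"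
    by (simp add: filterlim_at_split)
  have "((\<lambda>t. exp (real a * t) *\<^sub>R ((U a t w - w) /\<^sub>R t) + ((exp (real a * t) - 1) / t) *\<^sub>R w)
        \<longlongrightarrow> 1 *\<^sub>R v + real a *\<^sub>R w) (at_right 0)"
    by (intro tendsto_add tendsto_scaleR e1 e2 g[unfolded generator_at_def] tendsto_const)
  moreover have "eventually (\<lambda>t. exp (real a * t) *\<^sub>R ((U a t w - w) /\<^sub>R t) + ((exp (real a * t) - 1) / t) *\<^sub>R w
      = (S1 t w - w) /\<^sub>R t) (at_right 0)"
  proof -
    have "t \<noteq> 0 \<Longrightarrow> exp (real a * t) *\<^sub>R ((U a t w - w) /\<^sub>R t) + ((exp (real a * t) - 1) / t) *\<^sub>R w
      = (S1 t w - w) /\<^sub>R t" for t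
      by (simp add: U_def scaleR_diff_right algebra_simps exp_minus divide_simps)
         (simp add: scaleR_add_left[symmetric] add_divide_distrib[symmetric])
    thus ?thesis unfolding eventually_at_filter by (auto intro: always_eventually)
  qed
  ultimately show ?thesis unfolding generator_at_def using Lim_transform_eventually by fastforce
qed

lemma gen1_Mw: "generator_at S1 (Mw a x) ((U a h x - x) + real a *\<^sub>R Mw a x)"
  by (rule gen1_from_U[OF genU_Mw])

end


context crep_h begin

lemma A2_Mw:
  assumes g: "generator_at S2 z y"
  shows "generator_at S2 (Mw a z) (Mw (Suc a) y)"
proof -
  define X where "X = Mw a z"
  define Y where "Y = Mw (Suc a) y"
  define L where "L u x = (S2 u x - x) /\<^sub>R u" for u x
  have Llin: "bounded_linear (L u)" for u
    unfolding L_def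
    by (rule bounded_linear_compose[OF bounded_linear_scaleR_right bounded_linear_sub[OF lin2 bounded_linear_ident]])
  have iU: "(\<lambda>t. U b t x) integrable_on {0..h}" for b x
    by (rule integrable_continuous_real[OF U_cont])
  have cQ: "continuous_on {0..h} (\<lambda>t. L u (U a t z))" for u
    using continuous_on_compose[OF U_cont linear_continuous_on[OF Llin]] by (simp add: o_def)
  have iQ: "(\<lambda>t. L u (U a t z)) integrable_on {0..h}" for u
    by (rule integrable_continuous_real[OF cQ])
  have Q: "L u X = integral {0..h} (\<lambda>t. L u (U a t z))" for u
    using integral_linear[OF iU Llin] by (simp add: o_def X_def Mw_def)
  have diff: "L u X - Y = integral {0..h} (\<lambda>t. L u (U a t z) - U (Suc a) t y)" for u
    using integral_diff[OF iQ iU] Q by (simp add: Y_def Mw_def)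
  have pw: "norm (L u (U a t z) - U (Suc a) t y) \<le> norm ((S2 (exp (-t) * u) z - z) /\<^sub>R (exp (-t) * u) - y)"
    if t0: "t \<ge> 0" and u0: "u > 0" for t u
  proof -
    define e where "e = exp (- (real a * t))"
    define W where "W = (S2 (exp (-t) * u) z - z) /\<^sub>R (exp (-t) * u) - y"
    have "L u (U a t z) = e *\<^sub>R S1 t ((S2 (exp (-t) * u) z - z) /\<^sub>R u)"
      by (simp add: L_def U_def e_def S2_scale comm21 S1_diff S1_scale scaleR_diff_right mult.commute)
    also have "(S2 (exp (-t) * u) z - z) /\<^sub>R u = exp (-t) *\<^sub>R (W + y)"
      using u0 by (simp add: W_def)
    finally have 1: "L u (U a t z) = (e * exp (-t)) *\<^sub>R S1 t W + (e * exp (-t)) *\<^sub>R S1 t y"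
      by (simp add: S1_scale S1_plus scaleR_add_right)
    have 2: "U (Suc a) t y = (e * exp (-t)) *\<^sub>R S1 t y"
      by (simp add: U_def e_def algebra_simps exp_add[symmetric])
    have "norm (L u (U a t z) - U (Suc a) t y) = norm ((e * exp (-t)) *\<^sub>R S1 t W)"
      by (simp add: 1 2)
    also have "\<dots> = (e * exp (-t)) * norm (S1 t W)" by (simp add: e_def)
    also have "\<dots> \<le> 1 * norm W"
    proof (rule mult_mono)
      have "e \<le> 1" "exp (-t) \<le> 1" using t0 by (auto simp: e_def)
      thus "e * exp (- t) \<le> 1" by (simp add: e_def mult_le_one)
    qed (auto simp: norm1 e_def)
    finally show ?thesis by (simp add: W_def)
  qed
  have "((\<lambda>u. L u X) \<longlongrightarrow> Y) (at_right 0)"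
  proof (rule tendstoI)
    fix \<epsilon> :: real assume ep: "\<epsilon> > 0"
    define \<epsilon>' where "\<epsilon>' = \<epsilon> / (h + 1)"
    have ep': "\<epsilon>' > 0" using ep hpos by (simp add: \<epsilon>'_def)
    have "eventually (\<lambda>v. dist ((S2 v z - z) /\<^sub>R v) y < \<epsilon>') (at_right 0)"
      using tendstoD[OF g[unfolded generator_at_def] ep'] .
    then obtain b where b: "b > 0" and bb: "\<And>v. 0 < v \<Longrightarrow> v < b \<Longrightarrow> dist ((S2 v z - z) /\<^sub>R v) y < \<epsilon>'"
      unfolding eventually_at_right_field by auto
    have "dist (L u X) Y < \<epsilon>" if u: "0 < u" "u < b" for u
    proof -
      have bnd: "norm (L u (U a t z) - U (Suc a) t y) \<le> \<epsilon>'" if t: "t \<in> cbox 0 h" for t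
      proof -
        have t0: "t \<ge> 0" using t by simp
        have "exp (-t) \<le> 1" using t0 by simp
        hence "0 < exp (-t) * u" "exp (-t) * u < b" using u by (auto intro: le_less_trans[OF mult_left_le_one_le])
        hence "norm ((S2 (exp (-t) * u) z - z) /\<^sub>R (exp (-t) * u) - y) < \<epsilon>'"
          using bb[of "exp (-t) * u"] by (simp only: dist_norm)
        thus ?thesis using pw[OF t0 u(1)] by linarith
      qed
      have hi: "((\<lambda>t. L u (U a t z) - U (Suc a) t y) has_integral (L u X - Y)) (cbox 0 h)"
        unfolding diff cbox_interval
        by (rule integrable_integral) (intro integrable_diff iQ iU)
      have "norm (L u X - Y) \<le> \<epsilon>' * measure lborel (cbox 0 (h::real))"
        by (rule has_integral_bound[OF _ hi bnd]) (use ep' in simp)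
      also have "\<dots> = \<epsilon>' * h" using hpos by simp
      also have "\<dots> < \<epsilon>" using ep hpos unfolding \<epsilon>'_def by (simp add: field_simps)
      finally show ?thesis by (simp add: dist_norm)
    qed
    thus "eventually (\<lambda>u. dist (L u X) Y < \<epsilon>) (at_right 0)"
      unfolding eventually_at_right_field using b by auto
  qed
  thus ?thesis unfolding generator_at_def L_def X_def Y_def .
qed

end


context crep_h begin

fun good :: "nat \<Rightarrow> 'a \<Rightarrow> bool" where
  "good 0 x = True"
| "good (Suc k) x = ((\<exists>y. generator_at S1 x y \<and> good k y) \<and> (\<exists>y. generator_at S2 x y \<and> good k y))"

fun D2 :: "nat \<Rightarrow> 'a \<Rightarrow> bool" where
  "D2 0 z = True"
| "D2 (Suc k) z = (\<exists>y. generator_at S2 z y \<and> D2 k y)"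

fun Ml :: "nat list \<Rightarrow> 'a \<Rightarrow> 'a" where
  "Ml [] z = z"
| "Ml (a # as) z = Mw a (Ml as z)"

lemma linS1: "linear (S1 t)" and linS2: "linear (S2 t)"
  using lin1 lin2 by (auto simp: bounded_linear.linear)

lemma good_add: "good k x \<Longrightarrow> good k x' \<Longrightarrow> good k (x + x')"
proof (induction k arbitrary: x x')
  case (Suc k)
  from Suc.prems obtain y1 y2 y1' y2' where
    "generator_at S1 x y1" "good k y1" "generator_at S2 x y2" "good k y2"
    "generator_at S1 x' y1'" "good k y1'" "generator_at S2 x' y2'" "good k y2'" by auto
  hence "generator_at S1 (x + x') (y1 + y1')" "generator_at S2 (x + x') (y2 + y2')"
    by (auto intro: gen_add linS1 linS2)
  thus ?case using Suc.IH \<open>good k y1\<close> \<open>good k y1'\<close> \<open>good k y2\<close> \<open>good k y2'\<close> by auto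
qed simp

lemma good_scale: "good k x \<Longrightarrow> good k (c *\<^sub>R x)"
proof (induction k arbitrary: x)
  case (Suc k)
  from Suc.prems obtain y1 y2 where
    "generator_at S1 x y1" "good k y1" "generator_at S2 x y2" "good k y2" by auto
  hence "generator_at S1 (c *\<^sub>R x) (c *\<^sub>R y1)" "generator_at S2 (c *\<^sub>R x) (c *\<^sub>R y2)"
    by (auto intro: gen_scale linS1 linS2)
  thus ?case using Suc.IH \<open>good k y1\<close> \<open>good k y2\<close> by auto
qed simp

lemma good_diff: "good k x \<Longrightarrow> good k x' \<Longrightarrow> good k (x - x')"
  using good_add[of k x "(-1) *\<^sub>R x'"] good_scale[of k x' "-1"] by simp

lemma D2_mono: "D2 (Suc k) z \<Longrightarrow> D2 k z"
proof (induction k arbitrary: z)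
  case (Suc k) thus ?case by auto
qed simp

lemma A2_Ml: "generator_at S2 z y \<Longrightarrow> generator_at S2 (Ml as z) (Ml (map Suc as) y)"
  by (induction as) (auto intro: A2_Mw)

lemma main_ind: "k \<le> length as \<Longrightarrow> D2 k z \<Longrightarrow> good k (S1 c (Ml as z))"
proof (induction k arbitrary: c as z)
  case (Suc k)
  then obtain a as' where as: "as = a # as'" by (cases as) auto
  have la: "k \<le> length as'" using Suc.prems as by simp
  have dk: "D2 k z" using D2_mono Suc.prems by blast
  define x' where "x' = Ml as' z"
  have g1: "generator_at S1 (S1 c (Ml as z)) (S1 c ((U a h x' - x') + real a *\<^sub>R Mw a x'))"
    unfolding as x'_def by (simp add: gen1_pref gen1_Mw)
  have e1: "S1 c ((U a h x' - x') + real a *\<^sub>R Mw a x') =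
     (exp (- (real a * h)) *\<^sub>R S1 (c+h) x' - S1 c x') + real a *\<^sub>R S1 c (Ml as z)"
    by (simp add: U_def S1_plus S1_diff S1_scale S1_add as x'_def)
  have gg1: "good k (S1 c ((U a h x' - x') + real a *\<^sub>R Mw a x'))"
  proof -
    have "good k (S1 (c+h) x')" "good k (S1 c x')" unfolding x'_def using Suc.IH la dk by auto
    moreover have "good k (S1 c (Ml as z))" using Suc.IH Suc.prems dk by auto
    ultimately show ?thesis unfolding e1 by (intro good_add good_diff good_scale)
  qed
  from Suc.prems obtain y where y: "generator_at S2 z y" "D2 k y" by auto
  have g2: "generator_at S2 (S1 c (Ml as z)) (exp (-c) *\<^sub>R S1 c (Ml (map Suc as) y))"
    by (intro gen2_pref A2_Ml y)
  have gg2: "good k (exp (-c) *\<^sub>R S1 c (Ml (map Suc as) y))"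
    by (intro good_scale Suc.IH y) (use Suc.prems in simp)
  show ?case using g1 gg1 g2 gg2 by auto
qed simp

lemma good_word: "good k x \<Longrightarrow> length js \<le> k \<Longrightarrow> set js \<subseteq> {1, 2} \<Longrightarrow> \<exists>y. word_app T js x y"
proof (induction js arbitrary: k x rule: rev_induct)
  case Nil thus ?case by (auto intro: word_app.nil)
next
  case (snoc j js)
  then obtain k' where k: "k = Suc k'" by (cases k) auto
  have j: "j = 1 \<or> j = 2" using snoc.prems by auto
  from snoc.prems k obtain g where g: "generator_at (oneparam T j) x g" "good k' g"
    using j op1 op2 by auto
  then obtain y where "word_app T js g y" using snoc.IH[of k' g] snoc.prems k by auto
  thus ?case using word_app_snoc g by blast
qed

end


context crep_h begin

lemma iS2: "(\<lambda>t. S2 t x) integrable_on {0..h}"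
  by (rule integrable_continuous_real[OF S2_cont])
lemma iS1: "(\<lambda>t. S1 t x) integrable_on {0..h}"
  by (rule integrable_continuous_real) (rule continuous_on_subset[OF cont1], simp)

lemma M2_comm: "M2 (S2 c x) = S2 c (M2 x)"
proof -
  have "S2 c (M2 x) = integral {0..h} (\<lambda>t. S2 c (S2 t x))"
    using integral_linear[OF iS2 lin2] by (simp add: o_def M2_def)
  also have "\<dots> = integral {0..h} (\<lambda>t. S2 t (S2 c x))" by (simp add: S2_add[symmetric] add.commute)
  finally show ?thesis by (simp add: M2_def)
qed

lemma M2_diff: "M2 (x - y) = M2 x - M2 y"
  unfolding M2_def using integral_diff[OF iS2 iS2] by (simp add: S2_diff)

lemma M2p_comm: "(M2 ^^ p) (S2 c x) = S2 c ((M2 ^^ p) x)"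
  by (induction p) (auto simp: M2_comm)
lemma M2p_diff: "(M2 ^^ p) (x - y) = (M2 ^^ p) x - (M2 ^^ p) y"
  by (induction p) (auto simp: M2_diff)

lemma D2_M2: "D2 p ((M2 ^^ p) g)"
proof (induction p arbitrary: g)
  case (Suc p)
  have "generator_at S2 ((M2 ^^ Suc p) g) ((M2 ^^ p) (S2 h g - g))"
    using gen2_M2[of "(M2 ^^ p) g"] by (simp add: M2p_comm M2p_diff)
  thus ?case using Suc.IH by auto
qed simp

lemma cube1:
  assumes L: "bounded_linear L"
  shows "cube_int n h (\<lambda>ts. L (S2 (c + sum_list ts) g)) = L (S2 c ((M2 ^^ n) g))"
proof (induction n arbitrary: c)
  case 0 thus ?case by simp
next
  case (Suc n)
  have "cube_int (Suc n) h (\<lambda>ts. L (S2 (c + sum_list ts) g)) =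
        integral {0..h} (\<lambda>t. cube_int n h (\<lambda>ts. L (S2 ((c + t) + sum_list ts) g)))"
    by (simp add: add.assoc)
  also have "\<dots> = integral {0..h} (\<lambda>t. L (S2 c (S2 t ((M2 ^^ n) g))))"
    by (simp only: Suc.IH) (simp add: S2_add)
  also have "\<dots> = L (S2 c (M2 ((M2 ^^ n) g)))"
    using integral_linear[OF iS2 bounded_linear_compose[OF L lin2]] by (simp add: o_def M2_def)
  finally show ?case by simp
qed

lemma cube2:
  "cube_int (n + m) h (\<lambda>ts. S1 (c + sum_list (take n ts)) (S2 (sum_list (drop n ts)) f))
     = S1 c ((Mw 0 ^^ n) ((M2 ^^ m) f))"
proof (induction n arbitrary: c)
  case 0
  show ?case using cube1[OF lin1[of c], of m 0 f] by (simp add: S2_0)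
next
  case (Suc n)
  have "cube_int (Suc n + m) h (\<lambda>ts. S1 (c + sum_list (take (Suc n) ts)) (S2 (sum_list (drop (Suc n) ts)) f)) =
        integral {0..h} (\<lambda>t. cube_int (n + m) h (\<lambda>ts. S1 ((c + t) + sum_list (take n ts)) (S2 (sum_list (drop n ts)) f)))"
    by (simp add: add.assoc)
  also have "\<dots> = integral {0..h} (\<lambda>t. S1 c (S1 t ((Mw 0 ^^ n) ((M2 ^^ m) f))))"
    by (simp only: Suc.IH) (simp add: S1_add)
  also have "\<dots> = S1 c (Mw 0 ((Mw 0 ^^ n) ((M2 ^^ m) f)))"
    using integral_linear[OF iS1 lin1] by (simp add: o_def Mw_def U_def)
  finally show ?case by simp
qed

lemma Mw0_pow: "(Mw 0 ^^ r) x = Ml (replicate r 0) x"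
  by (induction r) auto

lemma final: "good r ((Mw 0 ^^ r) ((M2 ^^ r) f))"
  using main_ind[of r "replicate r 0" "(M2 ^^ r) f" 0] D2_M2[of r f] by (simp add: Mw0_pow S1_0)

end

theorem mainTheorem9:
  fixes T :: "real \<times> real \<Rightarrow> 'a::banach \<Rightarrow> 'a"
    and r :: nat and s :: real
  assumes "contr_rep T"
    and "r \<ge> 1"
    and "s > 0"
  shows "\<forall>f. hs_op T r s f \<in> Er T r"
proof
  fix f
  interpret crep_h T "s / real r"
    by unfold_locales (use assms in auto)
  have "hs_op T r s f = inverse ((s / real r) ^ (2 * r)) *\<^sub>R S1 0 ((Mw 0 ^^ r) ((M2 ^^ r) f))"
    unfolding hs_op_def op1 op2 using cube2[of r r 0 f] by (simp add: mult_2)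
  hence "good r (hs_op T r s f)" using good_scale[OF final[of r f]] by (simp add: S1_0)
  thus "hs_op T r s f \<in> Er T r" unfolding Er_def using good_word by blast
qed

end
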